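(* Let $\tau>2$ and $h>0$. Let $p>q$ be real numbers and $\alpha_p,\alpha_q$ nonzero complex numbers, and suppose there is a constant $C_\tau>0$ such that for all $a,b\in\mathbb{C}$, $$|a|^2+|b|^2\le C_\tau\int_0^\tau\left[\frac1{h^2}\left|a\alpha_pe^{ipt}+b\alpha_qe^{iqt}\right|^2+\left|a\alpha_p\,p\,e^{ipt}+b\alpha_q\,q\,e^{iqt}\right|^2\right]dt.$$ Then $$|p-q|\ge\sqrt{\frac{\frac1{2C_\tau\tau}\left(\frac1{|\alpha_p|^2}+\frac1{|\alpha_q|^2}\right)}{1+\frac16\tau^2\left(\frac1{h^2}+2(|q|^2+|p|^2)\right)}}.$$ *)

theory Defs
  imports "HOL-Analysis.Analysis"
begin

end

theory Submission
  imports Defs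
begin

lemma exp_diff_bound: "cmod (exp (\<i> * of_real x) - 1) \<le> \<bar>x\<bar>"
proof -
  have "cmod (exp (\<i> * of_real x) - 1) = 2 * \<bar>sin (x/2)\<bar>" by (rule dist_exp_i_1)
  also have "\<dots> \<le> 2 * \<bar>x/2\<bar>" using abs_sin_x_le_abs_x[of "x/2"] by linarith
  finally show ?thesis by simp
qed

lemma poly_int: "tau \<ge> 0 \<Longrightarrow> ((\<lambda>t::real. A * t^2 + B) has_integral (A * tau^3 / 3 + B * tau)) {0..tau}"
proof -
  assume "tau \<ge> 0"
  have "((\<lambda>t::real. A * t^2 + B) has_integral ((\<lambda>t. A * t^3/3 + B*t) tau - (\<lambda>t. A * t^3/3 + B*t) 0)) {0..tau}"
    apply (rule fundamental_theorem_of_calculus)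
    using \<open>tau \<ge> 0\<close> apply simp
    apply (auto intro!: derivative_eq_intros simp: has_real_derivative_iff_has_vector_derivative[symmetric])
    done
  then show ?thesis by simp
qed

theorem lemma5:
  fixes tau h p q C :: real and \<alpha>p \<alpha>q :: complex
  assumes "tau > 2" and "h > 0" and "p > q"
    and "\<alpha>p \<noteq> 0" and "\<alpha>q \<noteq> 0"
    and "C > 0"
    and obs: "\<And>a b :: complex. (cmod a)^2 + (cmod b)^2 \<le> C * integral {0..tau}
      (\<lambda>t. (1 / h^2) * (cmod (a * \<alpha>p * exp (\<i> * of_real (p * t)) + b * \<alpha>q * exp (\<i> * of_real (q * t))))^2
           + (cmod (a * \<alpha>p * of_real p * exp (\<i> * of_real (p * t)) + b * \<alpha>q * of_real q * exp (\<i> * of_real (q * t))))^2)"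
  shows "\<bar>p - q\<bar> \<ge> sqrt ((1 / (2 * C * tau) * (1 / (cmod \<alpha>p)^2 + 1 / (cmod \<alpha>q)^2))
            / (1 + (1/6) * tau^2 * (1 / h^2 + 2 * (\<bar>q\<bar>^2 + \<bar>p\<bar>^2))))"
proof -
  define d where "d = p - q"
  have d0: "d > 0" using assms by (simp add: d_def)
  define S where "S = 1 / (cmod \<alpha>p)^2 + 1 / (cmod \<alpha>q)^2"
  define f where "f = (\<lambda>t. (1 / h^2) * (cmod ((1/\<alpha>p) * \<alpha>p * exp (\<i> * of_real (p * t)) + (-1/\<alpha>q) * \<alpha>q * exp (\<i> * of_real (q * t))))^2
           + (cmod ((1/\<alpha>p) * \<alpha>p * of_real p * exp (\<i> * of_real (p * t)) + (-1/\<alpha>q) * \<alpha>q * of_real q * exp (\<i> * of_real (q * t))))^2)"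
  define A where "A = d^2 * (1/h^2 + 2*p^2)"
  define B where "B = 2 * d^2"
  have S: "S \<le> C * integral {0..tau} f"
    using obs[of "1/\<alpha>p" "-1/\<alpha>q"] unfolding S_def f_def by (simp add: norm_divide power_divide)
  have pt: "f t \<le> A * t^2 + B" if t: "t \<in> {0..tau}" for t
  proof -
    have t0: "t \<ge> 0" using t by simp
    have eq1: "exp (\<i> * of_real (p * t)) = exp (\<i> * of_real (q * t)) * exp (\<i> * of_real (d * t))"
    proof -
      have "\<i> * of_real (p * t) = \<i> * of_real (q * t) + \<i> * of_real (d * t)"
        by (simp add: d_def algebra_simps)
      then show ?thesis by (metis exp_add mult.commute)
    qed
    have D: "cmod (exp (\<i> * of_real (p * t)) - exp (\<i> * of_real (q * t))) \<le> d * t"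
    proof -
      have "exp (\<i> * of_real (p * t)) - exp (\<i> * of_real (q * t)) = exp (\<i> * of_real (q * t)) * (exp (\<i> * of_real (d * t)) - 1)"
        unfolding eq1 by (simp add: right_diff_distrib)
      then have "cmod (exp (\<i> * of_real (p * t)) - exp (\<i> * of_real (q * t))) = cmod (exp (\<i> * of_real (d * t)) - 1)"
        by (simp add: norm_mult)
      also have "\<dots> \<le> \<bar>d * t\<bar>" by (rule exp_diff_bound)
      also have "\<dots> = d * t" using d0 t0 by simp
      finally show ?thesis .
    qed
    have e1: "(1/\<alpha>p) * \<alpha>p * exp (\<i> * of_real (p * t)) + (-1/\<alpha>q) * \<alpha>q * exp (\<i> * of_real (q * t))
       = exp (\<i> * of_real (p * t)) - exp (\<i> * of_real (q * t))" using assms by simp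
    have e2: "(1/\<alpha>p) * \<alpha>p * of_real p * exp (\<i> * of_real (p * t)) + (-1/\<alpha>q) * \<alpha>q * of_real q * exp (\<i> * of_real (q * t))
       = of_real p * (exp (\<i> * of_real (p * t)) - exp (\<i> * of_real (q * t))) + of_real d * exp (\<i> * of_real (q * t))"
      using assms by (simp add: d_def algebra_simps)
    have N2: "cmod (of_real p * (exp (\<i> * of_real (p * t)) - exp (\<i> * of_real (q * t))) + of_real d * exp (\<i> * of_real (q * t)))
        \<le> \<bar>p\<bar> * (d * t) + d"
    proof -
      have "cmod (of_real p * (exp (\<i> * of_real (p * t)) - exp (\<i> * of_real (q * t))) + of_real d * exp (\<i> * of_real (q * t)))
        \<le> cmod (of_real p * (exp (\<i> * of_real (p * t)) - exp (\<i> * of_real (q * t)))) + cmod (of_real d * exp (\<i> * of_real (q * t)))"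
        by (rule norm_triangle_ineq)
      also have "\<dots> = \<bar>p\<bar> * cmod (exp (\<i> * of_real (p * t)) - exp (\<i> * of_real (q * t))) + d"
        using d0 by (simp add: norm_mult)
      also have "\<dots> \<le> \<bar>p\<bar> * (d * t) + d" using D by (simp add: mult_left_mono)
      finally show ?thesis .
    qed
    define X where "X = cmod (exp (\<i> * of_real (p * t)) - exp (\<i> * of_real (q * t)))"
    define Y where "Y = cmod (of_real p * (exp (\<i> * of_real (p * t)) - exp (\<i> * of_real (q * t))) + of_real d * exp (\<i> * of_real (q * t)))"
    have fX: "f t = (1/h^2) * X^2 + Y^2" unfolding f_def X_def Y_def e1 e2 by simp
    have X2: "X^2 \<le> (d*t)^2" using D unfolding X_def by (intro power_mono) auto
    have Y2: "Y^2 \<le> (\<bar>p\<bar> * (d * t) + d)^2" using N2 unfolding Y_def by (intro power_mono) auto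
    have Y3: "(\<bar>p\<bar> * (d * t) + d)^2 \<le> 2 * (\<bar>p\<bar> * (d * t))^2 + 2 * d^2"
    proof -
      have "0 \<le> (\<bar>p\<bar> * (d * t) - d)^2" by simp
      then show ?thesis by (simp add: power2_eq_square algebra_simps)
    qed
    have h2: "1/h^2 > 0" using assms by simp
    have "f t \<le> (1/h^2) * (d*t)^2 + (2 * (\<bar>p\<bar> * (d * t))^2 + 2 * d^2)"
      unfolding fX using X2 Y2 Y3 h2 by (smt (verit) mult_left_mono)
    also have "\<dots> = A * t^2 + B" unfolding A_def B_def by (simp add: power_mult_distrib algebra_simps)
    finally show ?thesis .
  qed
  have cont: "continuous_on {0..tau} f" unfolding f_def by (intro continuous_intros)
  have fint: "f integrable_on {0..tau}" using cont integrable_continuous_real by blast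
  have tau0: "tau \<ge> 0" using assms by simp
  have I: "integral {0..tau} f \<le> A * tau^3 / 3 + B * tau"
    using integral_le[OF fint has_integral_integrable[OF poly_int[OF tau0]] pt]
      integral_unique[OF poly_int[OF tau0]] by simp
  define K where "K = 2 * tau * (1 + (1/6) * tau^2 * (1 / h^2 + 2 * (\<bar>q\<bar>^2 + \<bar>p\<bar>^2)))"
  have K0: "K > 0" unfolding K_def using assms by (intro mult_pos_pos add_pos_nonneg) auto
  have AB: "A * tau^3 / 3 + B * tau \<le> d^2 * K"
  proof -
    have "A * tau^3 / 3 + B * tau = d^2 * (2*tau + tau^3/3 * (1/h^2 + 2*p^2))"
      unfolding A_def B_def by (simp add: algebra_simps)
    also have "\<dots> \<le> d^2 * K"
    proof (intro mult_left_mono)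
      have k: "K = 2*tau + tau^3/3 * (1/h^2 + 2*p^2) + tau^3/3 * (2 * q^2)"
        unfolding K_def by (simp add: algebra_simps power2_eq_square power3_eq_cube)
      have "0 \<le> tau^3/3 * (2 * q^2)" using tau0 by simp
      then show "2*tau + tau^3/3 * (1/h^2 + 2*p^2) \<le> K" unfolding k by linarith
    qed simp
    finally show ?thesis .
  qed
  have "S \<le> C * (d^2 * K)"
    using S I AB assms(6) by (smt (verit) mult_left_mono)
  then have SK: "S / (C * K) \<le> d^2" using K0 assms(6)
    by (simp add: divide_le_eq mult.commute mult.left_commute)
  have eq: "(1 / (2 * C * tau) * S) / (1 + (1/6) * tau^2 * (1 / h^2 + 2 * (\<bar>q\<bar>^2 + \<bar>p\<bar>^2))) = S / (C * K)"
  proof -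
    have "(2 * C * tau) * (1 + (1/6) * tau^2 * (1 / h^2 + 2 * (\<bar>q\<bar>^2 + \<bar>p\<bar>^2))) = C * K"
      unfolding K_def by (simp add: algebra_simps)
    moreover have "(1 / (2 * C * tau) * S) / (1 + (1/6) * tau^2 * (1 / h^2 + 2 * (\<bar>q\<bar>^2 + \<bar>p\<bar>^2)))
      = S / ((2 * C * tau) * (1 + (1/6) * tau^2 * (1 / h^2 + 2 * (\<bar>q\<bar>^2 + \<bar>p\<bar>^2))))"
      by simp
    ultimately show ?thesis by simp
  qed
  have "sqrt (S / (C * K)) \<le> sqrt (d^2)" using SK by (rule real_sqrt_le_mono)
  also have "\<dots> = \<bar>p - q\<bar>" by (simp add: d_def)
  finally show ?thesis using eq unfolding S_def by metis
qed

end
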